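(* Let $(S,T)$ be a connected triangulated surface (closed or with boundary) with edges $e_1,\dots,e_m$ and admissible metric space $\Omega_u$, and let $\bar{\mathbf w}=(\bar w_1,\dots,\bar w_m)\in\mathbb{R}^m$. Suppose there exists $\bar{\mathbf u}\in\Omega_u$ whose cotangent edge weights are $\bar{\mathbf w}$, i.e. $w_i(\bar{\mathbf u})=\bar w_i$ for all $i$. Then $\bar{\mathbf u}$ is the unique global minimizer on $\Omega_u$ of the energy $$\mathcal{E}(\mathbf u)=\int_{(1,\dots,1)}^{\mathbf u}\sum_{i=1}^m\big(\bar w_i-w_i(\mu)\big)\,d\mu_i,$$ the integral being taken along any piecewise smooth path in $\Omega_u$.
   Context: Admissible metric space: $\Omega_u=\{u\in\mathbb{R}^m_{>0}: \sum_k u_k=m$, and for every face with edges $e_a,e_b,e_c$, $(\sqrt{u_a},\sqrt{u_b},\sqrt{u_c})$ satisfies the strict triangle inequalities$\}$; $u$ corresponds to the Euclidean polyhedral metric with edge lengths $d_k=\sqrt{2u_k}$. $w_i(u)$ is the cotangent edge weight of $e_i$ in that metric: for an interior edge with opposite angles $\alpha,\beta$ in its two adjacent faces, $w_i=\tfrac12(\cot\alpha+\cot\beta)$; for a boundary edge with opposite angle $\alpha$, $w_i=\tfrac12\cot\alpha$. *)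

theory Defs
  imports "HOL-Analysis.Analysis"
begin

text \<open>Edges are the elements of a finite type 'e (so m = CARD('e)), faces the elements of a
  finite type 'f.  The map side f k (k = 0,1,2) gives the edge on the k-th side of face f.\<close>

definition incid :: "('f \<Rightarrow> nat \<Rightarrow> 'e) \<Rightarrow> 'e \<Rightarrow> ('f \<times> nat) set" where
  "incid side i = {(f, k). k < 3 \<and> side f k = i}"

definition triangulated_surface :: "('f::finite \<Rightarrow> nat \<Rightarrow> 'e::finite) \<Rightarrow> bool" where
  "triangulated_surface side \<longleftrightarrow>
     (\<forall>f. distinct [side f 0, side f 1, side f 2]) \<and>
     (\<forall>i. card (incid side i) = 1 \<or> card (incid side i) = 2)"

definition faces_adjacent :: "('f \<Rightarrow> nat \<Rightarrow> 'e) \<Rightarrow> 'f \<Rightarrow> 'f \<Rightarrow> bool" where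
  "faces_adjacent side f g \<longleftrightarrow> (\<exists>k<3. \<exists>l<3. side f k = side g l)"

definition connected_surface :: "('f \<Rightarrow> nat \<Rightarrow> 'e) \<Rightarrow> bool" where
  "connected_surface side \<longleftrightarrow> (\<forall>f g. (faces_adjacent side)\<^sup>*\<^sup>* f g)"

definition strict_triangle :: "real \<Rightarrow> real \<Rightarrow> real \<Rightarrow> bool" where
  "strict_triangle a b c \<longleftrightarrow> a < b + c \<and> b < a + c \<and> c < a + b"

definition Omega_u :: "('f \<Rightarrow> nat \<Rightarrow> 'e::finite) \<Rightarrow> (real^'e) set" where
  "Omega_u side = {u. (\<forall>i. u$i > 0) \<and> (\<Sum>i\<in>UNIV. u$i) = real CARD('e) \<and>
      (\<forall>f. strict_triangle (sqrt (u$side f 0)) (sqrt (u$side f 1)) (sqrt (u$side f 2)))}"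

definition edge_len :: "real^'e \<Rightarrow> 'e \<Rightarrow> real" where
  "edge_len u i = sqrt (2 * u$i)"

definition opp_angle :: "('f \<Rightarrow> nat \<Rightarrow> 'e) \<Rightarrow> real^'e \<Rightarrow> 'f \<Rightarrow> nat \<Rightarrow> real" where
  "opp_angle side u f k =
     (let a = edge_len u (side f k);
          b = edge_len u (side f ((k + 1) mod 3));
          c = edge_len u (side f ((k + 2) mod 3))
      in arccos ((b\<^sup>2 + c\<^sup>2 - a\<^sup>2) / (2 * b * c)))"

definition cot_weight :: "('f::finite \<Rightarrow> nat \<Rightarrow> 'e) \<Rightarrow> real^'e \<Rightarrow> 'e \<Rightarrow> real" where
  "cot_weight side u i = (1/2) * (\<Sum>(f, k)\<in>incid side i. cot (opp_angle side u f k))"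

definition is_energy :: "('f::finite \<Rightarrow> nat \<Rightarrow> 'e::finite) \<Rightarrow> real^'e \<Rightarrow> (real^'e \<Rightarrow> real) \<Rightarrow> bool" where
  "is_energy side wbar E \<longleftrightarrow>
     (\<forall>u\<in>Omega_u side. \<forall>\<gamma>::real \<Rightarrow> real^'e.
        \<gamma> piecewise_C1_differentiable_on {0..1} \<and> \<gamma> ` {0..1} \<subseteq> Omega_u side \<and>
        \<gamma> 0 = vec 1 \<and> \<gamma> 1 = u \<longrightarrow>
        ((\<lambda>t. \<Sum>i\<in>UNIV. (wbar$i - cot_weight side (\<gamma> t) i) * (vector_derivative \<gamma> (at t))$i)
           has_integral E u) {0..1})"

end

theory Submission
  imports Defs
begin

definition Qf :: "real \<Rightarrow> real \<Rightarrow> real \<Rightarrow> real" where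
  "Qf a b c = 2*(a*b+b*c+c*a) - a^2 - b^2 - c^2"

definition Bf :: "real \<Rightarrow> real \<Rightarrow> real \<Rightarrow> real \<Rightarrow> real \<Rightarrow> real \<Rightarrow> real" where
  "Bf a0 a1 a2 b0 b1 b2 = a0*(b1+b2-b0) + a1*(b2+b0-b1) + a2*(b0+b1-b2)"

lemma cs3: "(x0*y0+x1*y1+x2*y2::real)^2 \<le> (x0^2+x1^2+x2^2)*(y0^2+y1^2+y2^2)"
proof -
  have "(x0^2+x1^2+x2^2)*(y0^2+y1^2+y2^2) - (x0*y0+x1*y1+x2*y2)^2
      = (x0*y1-x1*y0)^2 + (x0*y2-x2*y0)^2 + (x1*y2-x2*y1)^2"
    by (simp add: power2_eq_square algebra_simps)
  moreover have "(x0*y1-x1*y0)^2 + (x0*y2-x2*y0)^2 + (x1*y2-x2*y1)^2 \<ge> 0" by simp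
  ultimately show ?thesis by linarith
qed

lemma lorentz:
  fixes a0 a1 a2 b0 b1 b2 sa sb Na Nb M :: real
  assumes "sa = a0+a1+a2" and "sb = b0+b1+b2"
  and "Na = (a0-sa/3)^2+(a1-sa/3)^2+(a2-sa/3)^2"
  and "Nb = (b0-sb/3)^2+(b1-sb/3)^2+(b2-sb/3)^2"
  and "M = (a0-sa/3)*(b0-sb/3)+(a1-sa/3)*(b1-sb/3)+(a2-sa/3)*(b2-sb/3)"
  shows "3*Qf a0 a1 a2 = sa^2 - 6*Na" "3*Bf a0 a1 a2 b0 b1 b2 = sa * sb - 6*M" "M^2 \<le> Na*Nb"
  unfolding Qf_def Bf_def assms
    apply (simp add: power2_eq_square field_simps; algebra)
   apply (simp add: power2_eq_square field_simps; algebra)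
  by (rule cs3)

lemma revCS:
  fixes a0 a1 a2 b0 b1 b2 :: real
  assumes "a0+a1+a2 > 0" "b0+b1+b2 > 0" "Qf a0 a1 a2 > 0" "Qf b0 b1 b2 > 0"
  shows "Bf a0 a1 a2 b0 b1 b2 \<ge> sqrt (Qf a0 a1 a2) * sqrt (Qf b0 b1 b2)"
proof -
  define sa where "sa = a0+a1+a2"
  define sb where "sb = b0+b1+b2"
  define Na where "Na = (a0-sa/3)^2+(a1-sa/3)^2+(a2-sa/3)^2"
  define Nb where "Nb = (b0-sb/3)^2+(b1-sb/3)^2+(b2-sb/3)^2"
  define M where "M = (a0-sa/3)*(b0-sb/3)+(a1-sa/3)*(b1-sb/3)+(a2-sa/3)*(b2-sb/3)"
  note L = lorentz[OF sa_def sb_def Na_def Nb_def M_def]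
  note Lb = lorentz(1)[OF sb_def sb_def Nb_def Nb_def refl]
  have Na0: "Na \<ge> 0" "Nb \<ge> 0" unfolding Na_def Nb_def by auto
  define p where "p = sqrt (6*Na)"
  define r where "r = sqrt (6*Nb)"
  have p2: "p^2 = 6*Na" "r^2 = 6*Nb" "p \<ge> 0" "r \<ge> 0" using Na0 by (auto simp: p_def r_def)
  have sa: "sa > 0" "sb > 0" using assms sa_def sb_def by auto
  have "p^2 < sa^2" using L(1) assms(3) p2 by linarith
  hence pl: "p < sa" using sa by (simp add: power2_less_imp_less)
  have "r^2 < sb^2" using Lb assms(4) p2 by linarith
  hence rl: "r < sb" using sa by (simp add: power2_less_imp_less)
  have "(6*M)^2 \<le> (p*r)^2" using L(3) p2 by (simp add: power_mult_distrib)
  hence "\<bar>6*M\<bar> \<le> \<bar>p*r\<bar>" by (simp add: abs_le_square_iff)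
  hence "6*M \<le> p*r" using p2 by simp
  hence B1: "3*Bf a0 a1 a2 b0 b1 b2 \<ge> sa * sb - p*r" using L(2) by linarith
  have "p*r < sa * sb" using pl rl p2 sa by (intro mult_strict_mono) auto
  hence pos: "sa * sb - p*r > 0" by simp
  have "(sa * sb - p*r)^2 - (sa^2-p^2)*(sb^2-r^2) = (sa*r - p * sb)^2"
    by (simp add: power2_eq_square algebra_simps)
  hence "(sa^2-p^2)*(sb^2-r^2) \<le> (sa * sb - p*r)^2"
    by (metis diff_ge_0_iff_ge zero_le_power2)
  hence "sqrt ((sa^2-p^2)*(sb^2-r^2)) \<le> sa * sb - p*r"
    using pos by (simp add: real_le_lsqrt)
  moreover have "(sa^2-p^2)*(sb^2-r^2) = 9 * (Qf a0 a1 a2 * Qf b0 b1 b2)"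
  proof -
    have "sa^2-p^2 = 3*Qf a0 a1 a2" "sb^2-r^2 = 3*Qf b0 b1 b2" using L(1) Lb p2 by linarith+
    thus ?thesis by simp
  qed
  moreover have "sqrt (9 * (Qf a0 a1 a2 * Qf b0 b1 b2)) = 3 * (sqrt (Qf a0 a1 a2) * sqrt (Qf b0 b1 b2))"
    by (simp add: real_sqrt_mult)
  ultimately show ?thesis using B1 by (metis order_trans mult_le_cancel_left_pos zero_less_numeral)
qed

lemma Qf_lin: "Qf (a0 - c*b0) (a1 - c*b1) (a2 - c*b2) = Qf a0 a1 a2 - 2*c*Bf a0 a1 a2 b0 b1 b2 + c^2 * Qf b0 b1 b2"
  unfolding Qf_def Bf_def by (simp add: power2_eq_square algebra_simps)

lemma Bf_lin: "Bf (a0 - c*b0) (a1 - c*b1) (a2 - c*b2) b0 b1 b2 = Bf a0 a1 a2 b0 b1 b2 - c * Qf b0 b1 b2"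
  unfolding Qf_def Bf_def by (simp add: power2_eq_square algebra_simps)

lemma null_orth:
  fixes v0 v1 v2 b0 b1 b2 :: real
  assumes "b0+b1+b2 > 0" "Qf b0 b1 b2 > 0" "Qf v0 v1 v2 = 0" "Bf v0 v1 v2 b0 b1 b2 = 0"
  shows "v0 = 0 \<and> v1 = 0 \<and> v2 = 0"
proof -
  define sa where "sa = v0+v1+v2"
  define sb where "sb = b0+b1+b2"
  define Na where "Na = (v0-sa/3)^2+(v1-sa/3)^2+(v2-sa/3)^2"
  define Nb where "Nb = (b0-sb/3)^2+(b1-sb/3)^2+(b2-sb/3)^2"
  define M where "M = (v0-sa/3)*(b0-sb/3)+(v1-sa/3)*(b1-sb/3)+(v2-sa/3)*(b2-sb/3)"
  note L = lorentz[OF sa_def sb_def Na_def Nb_def M_def]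
  note Lb = lorentz(1)[OF sb_def sb_def Nb_def Nb_def refl]
  have e1: "sa^2 = 6*Na" using L(1) assms by linarith
  have e2: "sa * sb = 6*M" using L(2) assms by linarith
  have e3: "6*Nb < sb^2" using Lb assms by linarith
  have "(sa * sb)^2 = 36 * M^2" using e2 by (simp add: power2_eq_square)
  also have "\<dots> \<le> 36 * (Na*Nb)" using L(3) by simp
  also have "\<dots> = sa^2 * (6*Nb)" using e1 by simp
  finally have "sa^2 * sb^2 \<le> sa^2 * (6*Nb)" by (simp add: power_mult_distrib)
  hence "sa^2 * (sb^2 - 6*Nb) \<le> 0" by (simp add: algebra_simps)
  hence "sa^2 \<le> 0" using e3 by (simp add: mult_le_0_iff)
  hence sa0: "sa = 0" by simp
  hence "Na = 0" using e1 by simp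
  hence "(v0-sa/3)^2 = 0 \<and> (v1-sa/3)^2 = 0 \<and> (v2-sa/3)^2 = 0" unfolding Na_def
    by (smt (verit) zero_le_power2)
  thus ?thesis using sa0 by simp
qed

lemma revCS_eq:
  fixes a0 a1 a2 b0 b1 b2 :: real
  assumes "a0+a1+a2 > 0" "b0+b1+b2 > 0" "Qf a0 a1 a2 > 0" "Qf b0 b1 b2 > 0"
    and "Bf a0 a1 a2 b0 b1 b2 = sqrt (Qf a0 a1 a2) * sqrt (Qf b0 b1 b2)"
  shows "\<exists>c>0. a0 = c*b0 \<and> a1 = c*b1 \<and> a2 = c*b2"
proof -
  define qa where "qa = sqrt (Qf a0 a1 a2)"
  define qb where "qb = sqrt (Qf b0 b1 b2)"
  have q: "qa > 0" "qb > 0" "qa^2 = Qf a0 a1 a2" "qb^2 = Qf b0 b1 b2"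
    using assms by (auto simp: qa_def qb_def)
  define c where "c = qa/qb"
  have "Qf (a0 - c*b0) (a1 - c*b1) (a2 - c*b2) = 0"
    unfolding Qf_lin assms(5) qa_def[symmetric] qb_def[symmetric] q(3)[symmetric] q(4)[symmetric] c_def
    using q(1,2) by (simp add: field_simps power2_eq_square)
  moreover have "Bf (a0 - c*b0) (a1 - c*b1) (a2 - c*b2) b0 b1 b2 = 0"
    unfolding Bf_lin assms(5) qa_def[symmetric] qb_def[symmetric] q(4)[symmetric] c_def
    using q(1,2) by (simp add: field_simps power2_eq_square)
  ultimately have "a0 - c*b0 = 0 \<and> a1 - c*b1 = 0 \<and> a2 - c*b2 = 0"
    using null_orth assms by blast
  moreover have "c > 0" using q by (simp add: c_def)
  ultimately show ?thesis by auto
qed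

lemma face_F_eq:
  fixes a0 a1 a2 b0 b1 b2 qa qb :: real
  assumes "qa > 0" "qb > 0" "qa*qa = Qf a0 a1 a2" "qb*qb = Qf b0 b1 b2"
  shows "((a1+a2-a0)/qa - (b1+b2-b0)/qb)*(b0-a0) + ((a2+a0-a1)/qa - (b2+b0-b1)/qb)*(b1-a1)
       + ((a0+a1-a2)/qa - (b0+b1-b2)/qb)*(b2-a2) = (Bf a0 a1 a2 b0 b1 b2 - qa*qb)*(1/qa + 1/qb)"
proof -
  have "((a1+a2-a0)/qa - (b1+b2-b0)/qb)*(b0-a0) + ((a2+a0-a1)/qa - (b2+b0-b1)/qb)*(b1-a1)
       + ((a0+a1-a2)/qa - (b0+b1-b2)/qb)*(b2-a2)
       = Bf a0 a1 a2 b0 b1 b2/qa - Qf a0 a1 a2/qa - Qf b0 b1 b2/qb + Bf a0 a1 a2 b0 b1 b2/qb"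
    using assms(1,2) unfolding Qf_def Bf_def by (simp add: field_simps power2_eq_square)
  also have "\<dots> = Bf a0 a1 a2 b0 b1 b2/qa - qa - qb + Bf a0 a1 a2 b0 b1 b2/qb"
    using assms by (simp add: assms(3,4)[symmetric])
  also have "\<dots> = (Bf a0 a1 a2 b0 b1 b2 - qa*qb)*(1/qa + 1/qb)"
    using assms(1,2) by (simp add: field_simps)
  finally show ?thesis .
qed

lemma Qf_pos:
  fixes x0 x1 x2 :: real
  assumes "x0 > 0" "x1 > 0" "x2 > 0" "strict_triangle (sqrt x0) (sqrt x1) (sqrt x2)"
  shows "Qf x0 x1 x2 > 0"
proof -
  define p0 where "p0 = sqrt x0"
  define p1 where "p1 = sqrt x1"
  define p2 where "p2 = sqrt x2"
  have x: "x0 = p0^2" "x1 = p1^2" "x2 = p2^2" using assms by (auto simp: p0_def p1_def p2_def)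
  have pp: "p0 > 0" "p1 > 0" "p2 > 0" using assms by (auto simp: p0_def p1_def p2_def)
  have t: "p0 < p1 + p2" "p1 < p0 + p2" "p2 < p0 + p1"
    using assms(4) unfolding strict_triangle_def p0_def p1_def p2_def by auto
  have "Qf x0 x1 x2 = (p0+p1+p2)*((p1+p2-p0)*((p0+p2-p1)*(p0+p1-p2)))"
    unfolding x Qf_def by (simp add: power2_eq_square algebra_simps)
  also have "\<dots> > 0" using pp t by (intro mult_pos_pos) auto
  finally show ?thesis .
qed

lemma cot_arccos_formula:
  fixes a b c :: real
  assumes "a > 0" "b > 0" "c > 0" "Qf a b c > 0"
  shows "cot (arccos ((b+c-a)/(2* sqrt(b*c)))) = (b+c-a)/sqrt (Qf a b c)"
proof -
  define s where "s = (b+c-a)/(2* sqrt(b*c))"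
  have sb: "sqrt (b*c) > 0" using assms by simp
  have sq: "(sqrt (b*c))^2 = b*c" using assms by simp
  have "1 - s^2 = Qf a b c / (4*(b*c))"
    unfolding s_def power_divide sq using sb sq assms unfolding Qf_def
    by (simp add: field_simps power2_eq_square)
  hence e: "1 - s^2 = Qf a b c / (2* sqrt(b*c))^2" using sq by (simp add: power_mult_distrib)
  hence pos: "1 - s^2 > 0" using assms sb by simp
  hence "s^2 < 1" by simp
  hence "\<bar>s\<bar> < 1" by (simp add: abs_square_less_1)
  hence s1: "-1 \<le> s" "s \<le> 1" by auto
  have "sqrt (1 - s^2) = sqrt (Qf a b c) / (2* sqrt(b*c))"
    unfolding e using sb by (simp add: real_sqrt_divide real_sqrt_mult)
  hence "cot (arccos s) = s / (sqrt (Qf a b c) / (2* sqrt(b*c)))"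
    by (simp add: cot_def sin_arccos s1 cos_arccos)
  also have "\<dots> = (b+c-a)/sqrt (Qf a b c)" unfolding s_def proof -
    have "sqrt (Qf a b c) > 0" using assms(4) by simp
    thus "(b + c - a) / (2 * sqrt (b * c)) / (sqrt (Qf a b c) / (2 * sqrt (b * c))) = (b + c - a) / sqrt (Qf a b c)"
      using sb assms(2,3) by (simp add: divide_divide_eq_left divide_divide_eq_right)
  qed
  finally show ?thesis by (simp add: s_def)
qed

lemma Omega_pos: "u \<in> Omega_u side \<Longrightarrow> u$i > 0"
  unfolding Omega_u_def by auto

lemma Omega_Qf: "u \<in> Omega_u side \<Longrightarrow> Qf (u$side f 0) (u$side f 1) (u$side f 2) > 0"
  by (rule Qf_pos) (auto simp: Omega_u_def)

lemma Qf_perm: "Qf a b c = Qf b c a" "Qf a b c = Qf c a b"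
  unfolding Qf_def by (simp_all add: algebra_simps)

lemma opp_cot:
  assumes u: "u \<in> Omega_u side" and k: "k < 3"
  shows "cot (opp_angle side u f k) = (u$side f ((k+1) mod 3) + u$side f ((k+2) mod 3) - u$side f k)
           / sqrt (Qf (u$side f 0) (u$side f 1) (u$side f 2))"
proof -
  define a where "a = u$side f k"
  define b where "b = u$side f ((k+1) mod 3)"
  define c where "c = u$side f ((k+2) mod 3)"
  have pos: "a > 0" "b > 0" "c > 0" using Omega_pos[OF u] by (auto simp: a_def b_def c_def)
  have Q: "Qf a b c = Qf (u$side f 0) (u$side f 1) (u$side f 2)"
  proof -
    have "k = 0 \<or> k = 1 \<or> k = 2" using k by auto
    moreover have "k = 0 \<Longrightarrow> ?thesis" unfolding a_def b_def c_def by (simp add: numeral_2_eq_2)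
    moreover have "k = 1 \<Longrightarrow> ?thesis" unfolding a_def b_def c_def
      by (simp add: numeral_2_eq_2 Qf_def algebra_simps)
    moreover have "k = 2 \<Longrightarrow> ?thesis" unfolding a_def b_def c_def
      by (simp add: numeral_2_eq_2 Qf_def algebra_simps)
    ultimately show ?thesis by blast
  qed
  have "opp_angle side u f k = arccos ((b+c-a)/(2 * sqrt(b*c)))"
  proof -
    have "(sqrt (2*b))^2 + (sqrt (2*c))^2 - (sqrt (2*a))^2 = 2*(b+c-a)" using pos by simp
    moreover have "2 * sqrt (2*b) * sqrt (2*c) = 4 * sqrt (b*c)"
    proof -
      have "sqrt (2*b) * sqrt (2*c) = sqrt (4*(b*c))" by (simp add: real_sqrt_mult[symmetric] algebra_simps)
      also have "\<dots> = 2 * sqrt (b*c)" by (simp add: real_sqrt_mult)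
      finally show ?thesis by simp
    qed
    moreover have "opp_angle side u f k = arccos (((sqrt (2*b))^2 + (sqrt (2*c))^2 - (sqrt(2*a))^2)/(2 * sqrt(2*b) * sqrt(2*c)))"
      unfolding opp_angle_def edge_len_def Let_def a_def b_def c_def by (rule refl)
    moreover have "(2 * b + 2 * c - 2 * a) / (4 * sqrt (b * c)) = (b + c - a) / (2 * sqrt (b * c))"
      using pos by (simp add: field_simps)
    ultimately show ?thesis by (simp add: mult.assoc)
  qed
  also have "cot \<dots> = (b+c-a)/sqrt (Qf a b c)"
    using cot_arccos_formula pos Q Omega_Qf[OF u] by simp
  finally show ?thesis using Q by (simp add: a_def b_def c_def)
qed

definition FF :: "('f::finite \<Rightarrow> nat \<Rightarrow> 'e::finite) \<Rightarrow> real^'e \<Rightarrow> real^'e \<Rightarrow> 'f \<Rightarrow> real" where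
  "FF side x y f = (\<Sum>k<3. (cot (opp_angle side x f k) - cot (opp_angle side y f k)) * (y$side f k - x$side f k))"

lemma three_set: "{..<3::nat} = {0,1,2}" by auto

lemma face_FF:
  assumes x: "x \<in> Omega_u side" and y: "y \<in> Omega_u side"
  shows "FF side x y f = (Bf (x$side f 0) (x$side f 1) (x$side f 2) (y$side f 0) (y$side f 1) (y$side f 2)
     - sqrt (Qf (x$side f 0) (x$side f 1) (x$side f 2)) * sqrt (Qf (y$side f 0) (y$side f 1) (y$side f 2)))
     * (1 / sqrt (Qf (x$side f 0) (x$side f 1) (x$side f 2)) + 1 / sqrt (Qf (y$side f 0) (y$side f 1) (y$side f 2)))"
proof -
  have s: "FF side x y f = (cot (opp_angle side x f 0) - cot (opp_angle side y f 0)) * (y$side f 0 - x$side f 0)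
     + (cot (opp_angle side x f 1) - cot (opp_angle side y f 1)) * (y$side f 1 - x$side f 1)
     + (cot (opp_angle side x f 2) - cot (opp_angle side y f 2)) * (y$side f 2 - x$side f 2)"
    unfolding FF_def three_set by simp
  have cx: "cot (opp_angle side x f 0) = (x$side f 1 + x$side f 2 - x$side f 0) / sqrt (Qf (x$side f 0) (x$side f 1) (x$side f 2))"
     "cot (opp_angle side x f 1) = (x$side f 2 + x$side f 0 - x$side f 1) / sqrt (Qf (x$side f 0) (x$side f 1) (x$side f 2))"
     "cot (opp_angle side x f 2) = (x$side f 0 + x$side f 1 - x$side f 2) / sqrt (Qf (x$side f 0) (x$side f 1) (x$side f 2))"
    using opp_cot[OF x, of 0 f] opp_cot[OF x, of 1 f] opp_cot[OF x, of 2 f] by (simp_all add: numeral_2_eq_2)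
  have cy: "cot (opp_angle side y f 0) = (y$side f 1 + y$side f 2 - y$side f 0) / sqrt (Qf (y$side f 0) (y$side f 1) (y$side f 2))"
     "cot (opp_angle side y f 1) = (y$side f 2 + y$side f 0 - y$side f 1) / sqrt (Qf (y$side f 0) (y$side f 1) (y$side f 2))"
     "cot (opp_angle side y f 2) = (y$side f 0 + y$side f 1 - y$side f 2) / sqrt (Qf (y$side f 0) (y$side f 1) (y$side f 2))"
    using opp_cot[OF y, of 0 f] opp_cot[OF y, of 1 f] opp_cot[OF y, of 2 f] by (simp_all add: numeral_2_eq_2)
  show ?thesis unfolding s cx cy
    by (rule face_F_eq) (use Omega_Qf[OF x, of f] Omega_Qf[OF y, of f] in auto)
qed

lemma face_FF_nonneg:
  assumes x: "x \<in> Omega_u side" and y: "y \<in> Omega_u side"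
  shows "FF side x y f \<ge> 0"
proof -
  have "Bf (x$side f 0) (x$side f 1) (x$side f 2) (y$side f 0) (y$side f 1) (y$side f 2)
     \<ge> sqrt (Qf (x$side f 0) (x$side f 1) (x$side f 2)) * sqrt (Qf (y$side f 0) (y$side f 1) (y$side f 2))"
    by (rule revCS) (use Omega_Qf[OF x, of f] Omega_Qf[OF y, of f] Omega_pos[OF x] Omega_pos[OF y] in
      \<open>auto intro: add_pos_pos\<close>)
  moreover have "1 / sqrt (Qf (x$side f 0) (x$side f 1) (x$side f 2)) + 1 / sqrt (Qf (y$side f 0) (y$side f 1) (y$side f 2)) > 0"
    using Omega_Qf[OF x, of f] Omega_Qf[OF y, of f] by (intro add_pos_pos) auto
  ultimately show ?thesis unfolding face_FF[OF x y] by simp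
qed

lemma face_FF_zero:
  assumes x: "x \<in> Omega_u side" and y: "y \<in> Omega_u side" and z: "FF side x y f = 0"
  shows "\<exists>c>0. \<forall>k<3. x$side f k = c * y$side f k"
proof -
  have "1 / sqrt (Qf (x$side f 0) (x$side f 1) (x$side f 2)) + 1 / sqrt (Qf (y$side f 0) (y$side f 1) (y$side f 2)) > 0"
    using Omega_Qf[OF x, of f] Omega_Qf[OF y, of f] by (intro add_pos_pos) auto
  hence "Bf (x$side f 0) (x$side f 1) (x$side f 2) (y$side f 0) (y$side f 1) (y$side f 2)
     = sqrt (Qf (x$side f 0) (x$side f 1) (x$side f 2)) * sqrt (Qf (y$side f 0) (y$side f 1) (y$side f 2))"
    using z unfolding face_FF[OF x y] by simp
  hence "\<exists>c>0. x$side f 0 = c * y$side f 0 \<and> x$side f 1 = c * y$side f 1 \<and> x$side f 2 = c * y$side f 2"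
    by (intro revCS_eq) (use Omega_Qf[OF x, of f] Omega_Qf[OF y, of f] Omega_pos[OF x] Omega_pos[OF y] in
      \<open>auto intro: add_pos_pos\<close>)
  then obtain c where "c > 0" "x$side f 0 = c * y$side f 0 \<and> x$side f 1 = c * y$side f 1 \<and> x$side f 2 = c * y$side f 2"
    by blast
  moreover have "k < 3 \<Longrightarrow> k = 0 \<or> k = 1 \<or> k = 2" for k::nat by auto
  ultimately show ?thesis by (intro exI[of _ c]) auto
qed

lemma sum_decomp:
  fixes side :: "'f::finite \<Rightarrow> nat \<Rightarrow> 'e::finite"
  shows "(\<Sum>i\<in>UNIV. (cot_weight side x i - cot_weight side y i) * (y$i - x$i)) = 1/2 * (\<Sum>f\<in>UNIV. FF side x y f)"
proof -
  define g where "g = (\<lambda>p::'f\<times>nat. side (fst p) (snd p))"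
  define h where "h = (\<lambda>p::'f\<times>nat. (cot (opp_angle side x (fst p) (snd p)) - cot (opp_angle side y (fst p) (snd p))) * (y$g p - x$g p))"
  have inc: "incid side i = {p \<in> UNIV \<times> {..<3}. g p = i}" for i
    unfolding incid_def g_def by auto
  have "(cot_weight side x i - cot_weight side y i) * (y$i - x$i) = 1/2 * (\<Sum>p\<in>incid side i. h p)" for i
  proof -
    have "(\<Sum>p\<in>incid side i. h p) = (\<Sum>p\<in>incid side i. (cot (opp_angle side x (fst p) (snd p)) - cot (opp_angle side y (fst p) (snd p))) * (y$i - x$i))"
      unfolding h_def by (rule sum.cong) (auto simp: inc)
    also have "\<dots> = ((\<Sum>(f,k)\<in>incid side i. cot (opp_angle side x f k)) - (\<Sum>(f,k)\<in>incid side i. cot (opp_angle side y f k))) * (y$i - x$i)"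
      by (simp add: sum_distrib_right[symmetric] sum_subtractf[symmetric] case_prod_beta)
    finally have e: "sum h (incid side i) = ((\<Sum>(f,k)\<in>incid side i. cot (opp_angle side x f k)) - (\<Sum>(f,k)\<in>incid side i. cot (opp_angle side y f k))) * (y$i - x$i)" .
    have cw: "cot_weight side x i - cot_weight side y i = 1/2 * ((\<Sum>(f,k)\<in>incid side i. cot (opp_angle side x f k)) - (\<Sum>(f,k)\<in>incid side i. cot (opp_angle side y f k)))"
      unfolding cot_weight_def by (simp add: right_diff_distrib)
    show ?thesis unfolding cw e by simp
  qed
  hence "(\<Sum>i\<in>UNIV. (cot_weight side x i - cot_weight side y i) * (y$i - x$i)) = 1/2 * (\<Sum>i\<in>UNIV. \<Sum>p\<in>incid side i. h p)"
    by (simp add: sum_distrib_left)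
  also have "(\<Sum>i\<in>UNIV. \<Sum>p\<in>incid side i. h p) = (\<Sum>p\<in>UNIV \<times> {..<3}. h p)"
    unfolding inc by (rule sum.group) auto
  also have "\<dots> = (\<Sum>f\<in>UNIV. \<Sum>k<3. h (f,k))"
    by (simp add: sum.cartesian_product)
  also have "\<dots> = (\<Sum>f\<in>UNIV. FF side x y f)"
    unfolding FF_def h_def g_def by simp
  finally show ?thesis .
qed

lemma mono_nonneg:
  assumes x: "x \<in> Omega_u side" and y: "y \<in> Omega_u side"
  shows "(\<Sum>i\<in>UNIV. (cot_weight side x i - cot_weight side y i) * (y$i - x$i)) \<ge> 0"
  unfolding sum_decomp using face_FF_nonneg[OF x y] by (simp add: sum_nonneg)

lemma mono_strict:
  fixes side :: "'f::finite \<Rightarrow> nat \<Rightarrow> 'e::finite"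
  assumes ts: "triangulated_surface side" and cs: "connected_surface side"
    and x: "x \<in> Omega_u side" and y: "y \<in> Omega_u side"
    and z: "(\<Sum>i\<in>UNIV. (cot_weight side x i - cot_weight side y i) * (y$i - x$i)) = 0"
  shows "x = y"
proof -
  have "(\<Sum>f\<in>UNIV. FF side x y f) = 0" using z unfolding sum_decomp by simp
  hence "\<forall>f. FF side x y f = 0"
    using sum_nonneg_eq_0_iff[of UNIV "FF side x y"] face_FF_nonneg[OF x y] by simp
  hence "\<forall>f. \<exists>c>0. \<forall>k<3. x$side f k = c * y$side f k" using face_FF_zero[OF x y] by blast
  then obtain c where c: "\<And>f. c f > 0" "\<And>f k. k < 3 \<Longrightarrow> x$side f k = c f * y$side f k"
    by metis
  have adj: "c f = c g" if fg: "faces_adjacent side f g" for f g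
  proof -
    obtain k l where kl: "k < 3" "l < 3" "side f k = side g l"
      using fg unfolding faces_adjacent_def by blast
    have e1: "x$side g l = c f * y$side g l" using c(2)[OF kl(1), of f] kl(3) by simp
    have "c f * y$side f k = c g * y$side f k" using e1 c(2)[OF kl(2), of g] unfolding kl(3) by linarith
    moreover have "y$side f k > 0" using Omega_pos[OF y] .
    ultimately show ?thesis by simp
  qed
  define f0 :: 'f where "f0 = undefined"
  have cc: "c g = c f0" for g
  proof -
    have "(faces_adjacent side)\<^sup>*\<^sup>* f0 g" using cs unfolding connected_surface_def by blast
    thus ?thesis
    proof (induction rule: rtranclp_induct)
      case base thus ?case by simp
    next
      case (step g h) thus ?case using adj[of g h] by simp
    qed
  qed
  have xi: "x$i = c f0 * y$i" for i
  proof -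
    have "card (incid side i) \<noteq> 0" using ts unfolding triangulated_surface_def by (metis zero_neq_one zero_neq_numeral)
    hence "incid side i \<noteq> {}" by auto
    then obtain f k where "k < 3" "side f k = i" unfolding incid_def by auto
    thus ?thesis using c(2)[of k f] cc[of f] by simp
  qed
  have "(\<Sum>i\<in>UNIV. x$i) = c f0 * (\<Sum>i\<in>UNIV. y$i)" by (simp add: xi sum_distrib_left)
  moreover have "(\<Sum>i\<in>UNIV. x$i) = real CARD('e)" "(\<Sum>i\<in>UNIV. y$i) = real CARD('e)"
    using x y unfolding Omega_u_def by auto
  moreover have "real CARD('e) > 0" by simp
  ultimately have "c f0 = 1" by simp
  thus ?thesis using xi by (simp add: vec_eq_iff)
qed

lemma tri_conv_aux:
  fixes a b pa pb pc qa qb qc :: real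
  assumes "a \<ge> 0" "b \<ge> 0" "a + b = 1" "pa \<ge> 0" "qa \<ge> 0"
    "pa < pb + pc" "qa < qb + qc"
  shows "sqrt (a*pa^2 + b*qa^2) < sqrt (a*pb^2 + b*qb^2) + sqrt (a*pc^2 + b*qc^2)"
proof -
  define A where "A = sqrt a * pb"
  define B where "B = sqrt b * qb"
  define C where "C = sqrt a * pc"
  define D where "D = sqrt b * qc"
  have AB: "A^2 + B^2 = a*pb^2 + b*qb^2" "C^2 + D^2 = a*pc^2 + b*qc^2"
    using assms by (simp_all add: A_def B_def C_def D_def power_mult_distrib)
  have "sqrt a * pa \<le> sqrt a * (pb + pc)" using assms by (intro mult_left_mono) auto
  hence h1: "(sqrt a * pa)^2 \<le> (A + C)^2"
    unfolding A_def C_def using assms by (intro power_mono) (auto simp: algebra_simps)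
  have "sqrt b * qa \<le> sqrt b * (qb + qc)" using assms by (intro mult_left_mono) auto
  hence h2: "(sqrt b * qa)^2 \<le> (B + D)^2"
    unfolding B_def D_def using assms by (intro power_mono) (auto simp: algebra_simps)
  have "a > 0 \<or> b > 0" using assms by auto
  hence strict: "(sqrt a * pa)^2 < (A + C)^2 \<or> (sqrt b * qa)^2 < (B + D)^2"
  proof
    assume "a > 0"
    hence "sqrt a * pa < sqrt a * (pb + pc)" using assms by simp
    hence "(sqrt a * pa)^2 < (A + C)^2" unfolding A_def C_def using assms
      by (intro power_strict_mono) (auto simp: algebra_simps)
    thus ?thesis ..
  next
    assume "b > 0"
    hence "sqrt b * qa < sqrt b * (qb + qc)" using assms by simp
    hence "(sqrt b * qa)^2 < (B + D)^2" unfolding B_def D_def using assms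
      by (intro power_strict_mono) (auto simp: algebra_simps)
    thus ?thesis ..
  qed
  have "a*pa^2 + b*qa^2 = (sqrt a * pa)^2 + (sqrt b * qa)^2" using assms by (simp add: power_mult_distrib)
  also have "\<dots> < (A + C)^2 + (B + D)^2" using h1 h2 strict by linarith
  finally have "sqrt (a*pa^2 + b*qa^2) < sqrt ((A + C)^2 + (B + D)^2)" by simp
  also have "\<dots> \<le> sqrt (A^2 + B^2) + sqrt (C^2 + D^2)" by (rule real_sqrt_sum_squares_triangle_ineq)
  finally show ?thesis unfolding AB .
qed

lemma tri_conv:
  fixes a b xa xb xc ya yb yc :: real
  assumes "a \<ge> 0" "b \<ge> 0" "a + b = 1" "xa > 0" "xb > 0" "xc > 0" "ya > 0" "yb > 0" "yc > 0"
    "sqrt xa < sqrt xb + sqrt xc" "sqrt ya < sqrt yb + sqrt yc"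
  shows "sqrt (a*xa + b*ya) < sqrt (a*xb + b*yb) + sqrt (a*xc + b*yc)"
  using tri_conv_aux[OF assms(1-3), of "sqrt xa" "sqrt ya" "sqrt xb" "sqrt xc" "sqrt yb" "sqrt yc"] assms
  by simp

lemma Omega_convex: "convex (Omega_u side)"
proof (rule convexI)
  fix x y :: "real^'a" and a b :: real
  assume x: "x \<in> Omega_u side" and y: "y \<in> Omega_u side" and ab: "0 \<le> a" "0 \<le> b" "a + b = 1"
  have p: "\<And>i. x$i > 0" "\<And>i. y$i > 0" using x y by (auto simp: Omega_u_def)
  have pos: "(a *\<^sub>R x + b *\<^sub>R y)$i > 0" for i
  proof -
    have "a > 0 \<or> b > 0" using ab by auto
    thus ?thesis using p[of i] ab by (auto intro: add_pos_nonneg add_nonneg_pos)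
  qed
  have sum: "(\<Sum>i\<in>UNIV. (a *\<^sub>R x + b *\<^sub>R y)$i) = real CARD('a)"
  proof -
    have "(\<Sum>i\<in>UNIV. (a *\<^sub>R x + b *\<^sub>R y)$i) = a * (\<Sum>i\<in>UNIV. x$i) + b * (\<Sum>i\<in>UNIV. y$i)"
      by (simp add: sum.distrib sum_distrib_left)
    also have "\<dots> = (a + b) * real CARD('a)" using x y by (simp add: Omega_u_def distrib_right)
    finally show ?thesis using ab by simp
  qed
  have tri: "strict_triangle (sqrt ((a *\<^sub>R x + b *\<^sub>R y)$side f 0)) (sqrt ((a *\<^sub>R x + b *\<^sub>R y)$side f 1)) (sqrt ((a *\<^sub>R x + b *\<^sub>R y)$side f 2))" for f
  proof -
    have tx: "strict_triangle (sqrt (x$side f 0)) (sqrt (x$side f 1)) (sqrt (x$side f 2))"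
      and ty: "strict_triangle (sqrt (y$side f 0)) (sqrt (y$side f 1)) (sqrt (y$side f 2))"
      using x y by (auto simp: Omega_u_def)
    show ?thesis using tx ty unfolding strict_triangle_def
      using tri_conv[OF ab, of "x$side f 0" "x$side f 1" "x$side f 2" "y$side f 0" "y$side f 1" "y$side f 2"]
        tri_conv[OF ab, of "x$side f 1" "x$side f 0" "x$side f 2" "y$side f 1" "y$side f 0" "y$side f 2"]
        tri_conv[OF ab, of "x$side f 2" "x$side f 0" "x$side f 1" "y$side f 2" "y$side f 0" "y$side f 1"]
        p by (simp add: add.commute)
  qed
  show "a *\<^sub>R x + b *\<^sub>R y \<in> Omega_u side"
    unfolding Omega_u_def using pos sum tri by blast
qed

lemma Mn_scale:
  assumes "y - x = c *\<^sub>R v"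
  shows "(\<Sum>i\<in>UNIV. (cot_weight side x i - cot_weight side y i) * (y$i - x$i))
       = c * (\<Sum>i\<in>UNIV. (cot_weight side x i - cot_weight side y i) * v$i)"
proof -
  have "y$i - x$i = c * v$i" for i using arg_cong[OF assms, of "\<lambda>z. z$i"] by simp
  thus ?thesis by (simp add: sum_distrib_left algebra_simps)
qed

lemma one_in_Omega: "(vec 1 :: real^'e::finite) \<in> Omega_u (side :: 'f \<Rightarrow> nat \<Rightarrow> 'e)"
  unfolding Omega_u_def strict_triangle_def by simp

lemma g_props:
  fixes side :: "'f::finite \<Rightarrow> nat \<Rightarrow> 'e::finite"
  assumes ts: "triangulated_surface side" and cs: "connected_surface side"
    and ub: "ubar \<in> Omega_u side" and u: "u \<in> Omega_u side"
  defines "g \<equiv> \<lambda>s. (\<Sum>i\<in>UNIV. (cot_weight side ubar i - cot_weight side (linepath ubar u s) i) * (u - ubar)$i)"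
  shows "\<And>s. 0 \<le> s \<Longrightarrow> s \<le> 1 \<Longrightarrow> g s \<ge> 0"
    and "\<And>s. 1/2 \<le> s \<Longrightarrow> s \<le> 1 \<Longrightarrow> g s \<ge> g (1/2)"
    and "u \<noteq> ubar \<Longrightarrow> g (1/2) > 0"
proof -
  have inO: "linepath ubar u s \<in> Omega_u side" if "0 \<le> s" "s \<le> 1" for s
    using closed_segment_subset[OF ub u Omega_convex] that
    by (metis atLeastAtMost_iff path_image_linepath linepath_image_01 image_eqI subsetD)
  have diff: "linepath ubar u s - linepath ubar u s' = (s - s') *\<^sub>R (u - ubar)" for s s'
    unfolding linepath_def by (simp add: algebra_simps)
  have gdiff: "(s - s') * (g s - g s') = (\<Sum>i\<in>UNIV. (cot_weight side (linepath ubar u s') i - cot_weight side (linepath ubar u s) i) * ((linepath ubar u s)$i - (linepath ubar u s')$i))" for s s'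
  proof -
    have "g s - g s' = (\<Sum>i\<in>UNIV. (cot_weight side (linepath ubar u s') i - cot_weight side (linepath ubar u s) i) * (u - ubar)$i)"
      unfolding g_def by (simp add: sum_subtractf[symmetric] algebra_simps)
    thus ?thesis using Mn_scale[OF diff[of s s'], of side] by simp
  qed
  have g0: "g 0 = 0" unfolding g_def by (simp add: linepath_def)
  have mono: "g s' \<le> g s" if "0 \<le> s'" "s' < s" "s \<le> 1" for s s'
  proof -
    have "(s - s') * (g s - g s') \<ge> 0" unfolding gdiff
      by (rule mono_nonneg) (use inO that in auto)
    thus ?thesis using that by (simp add: zero_le_mult_iff)
  qed
  show "g s \<ge> 0" if "0 \<le> s" "s \<le> 1" for s
    using mono[of 0 s] that g0 by (cases "s = 0") auto
  show "g s \<ge> g (1/2)" if "1/2 \<le> s" "s \<le> 1" for s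
  proof (cases "s = 1/2")
    case True thus ?thesis by (simp only:)
  next
    case False thus ?thesis using mono[of "1/2" s] that by auto
  qed
  show "g (1/2) > 0" if ne: "u \<noteq> ubar"
  proof (rule ccontr)
    assume "\<not> g (1/2) > 0"
    moreover have "g (1/2) \<ge> 0" using mono[of 0 "1/2"] g0 by simp
    ultimately have "g (1/2) = 0" by simp
    hence "(\<Sum>i\<in>UNIV. (cot_weight side (linepath ubar u 0) i - cot_weight side (linepath ubar u (1/2)) i) * ((linepath ubar u (1/2))$i - (linepath ubar u 0)$i)) = 0"
      using gdiff[of "1/2" 0] g0 by simp
    hence "linepath ubar u 0 = linepath ubar u (1/2)"
      using mono_strict[OF ts cs inO[of 0] inO[of "1/2"]] by simp
    hence "(1/2::real) *\<^sub>R (u - ubar) = 0" using diff[of "1/2" 0] by simp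
    thus False using ne by simp
  qed
qed

lemma lp_deriv:
  fixes a b :: "'a::real_normed_vector"
  shows "((\<lambda>y. linepath a b (2*y + c)) has_vector_derivative 2 *\<^sub>R (b - a)) (at t)"
  unfolding linepath_def
  by (auto intro!: derivative_eq_intros simp: algebra_simps)

lemma seg_in:
  assumes "a \<in> Omega_u side" "b \<in> Omega_u side"
  shows "linepath a b ` {0..1} \<subseteq> Omega_u side"
  using closed_segment_subset[OF assms Omega_convex] by (metis path_image_def path_image_linepath)

lemma key:
  fixes side :: "'f::finite \<Rightarrow> nat \<Rightarrow> 'e::finite"
    and wbar ubar :: "real^'e"
    and E :: "real^'e \<Rightarrow> real"
  assumes ts: "triangulated_surface side"
    and cs: "connected_surface side"
    and ub: "ubar \<in> Omega_u side"
    and wb: "\<forall>i. cot_weight side ubar i = wbar$i"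
    and en: "is_energy side wbar E"
    and u: "u \<in> Omega_u side"
  shows "\<exists>J. E u = E ubar + J \<and> J \<ge> 0 \<and> (u \<noteq> ubar \<longrightarrow> J > 0)"
proof -
  define one where "one = (vec 1 :: real^'e)"
  have one: "one \<in> Omega_u side" unfolding one_def by (rule one_in_Omega)
  define p1 where "p1 = linepath one ubar"
  define p2 where "p2 = linepath ubar u"
  define \<gamma> where "\<gamma> = p1 +++ p2"
  define I1 where "I1 = (\<lambda>t. \<Sum>i\<in>UNIV. (wbar$i - cot_weight side (p1 t) i) * (vector_derivative p1 (at t))$i)"
  define H where "H = (\<lambda>t. \<Sum>i\<in>UNIV. (wbar$i - cot_weight side (\<gamma> t) i) * (vector_derivative \<gamma> (at t))$i)"
  define g where "g = (\<lambda>s. (\<Sum>i\<in>UNIV. (cot_weight side ubar i - cot_weight side (linepath ubar u s) i) * (u - ubar)$i))"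
  have gp1: "\<And>s. 0 \<le> s \<Longrightarrow> s \<le> 1 \<Longrightarrow> g s \<ge> 0"
    using g_props(1)[OF ts cs ub u] unfolding g_def by simp
  have gp2: "\<And>s. 1/2 \<le> s \<Longrightarrow> s \<le> 1 \<Longrightarrow> g s \<ge> g (1/2)"
    using g_props(2)[OF ts cs ub u] unfolding g_def by simp
  have gp3: "u \<noteq> ubar \<Longrightarrow> g (1/2) > 0"
    using g_props(3)[OF ts cs ub u] unfolding g_def by simp
  have en': "\<And>v c. v \<in> Omega_u side \<Longrightarrow> c piecewise_C1_differentiable_on {0..1} \<Longrightarrow> c ` {0..1} \<subseteq> Omega_u side
      \<Longrightarrow> c 0 = one \<Longrightarrow> c 1 = v \<Longrightarrow>
      ((\<lambda>t. \<Sum>i\<in>UNIV. (wbar$i - cot_weight side (c t) i) * (vector_derivative c (at t))$i) has_integral E v) {0..1}"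
    using en unfolding is_energy_def one_def by blast
  have hE1: "(I1 has_integral E ubar) {0..1}"
    unfolding I1_def
    by (rule en'[OF ub]) (use seg_in[OF one ub] valid_path_linepath[of one ubar] in
       \<open>auto simp: p1_def valid_path_def linepath_def\<close>)
  have pf: "pathfinish p1 = pathstart p2" by (simp add: p1_def p2_def)
  have hE2: "(H has_integral E u) {0..1}"
    unfolding H_def
  proof (rule en'[OF u])
    show "\<gamma> piecewise_C1_differentiable_on {0..1}"
      using valid_path_join[of p1 p2] pf valid_path_linepath[of one ubar] valid_path_linepath[of ubar u]
      unfolding valid_path_def \<gamma>_def p1_def p2_def by blast
    show "\<gamma> ` {0..1} \<subseteq> Omega_u side"
      using path_image_join[OF pf] seg_in[OF one ub] seg_in[OF ub u]
      unfolding path_image_def \<gamma>_def p1_def p2_def by auto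
    show "\<gamma> 0 = one" "\<gamma> 1 = u" unfolding \<gamma>_def p1_def p2_def joinpaths_def linepath_def by simp_all
  qed
  have H1: "H t = 2 * I1 (2*t)" if "0 < t" "t < 1/2" for t
  proof -
    have "((\<lambda>y. p1 (2*y + 0)) has_vector_derivative 2 *\<^sub>R (ubar - one)) (at t)"
      unfolding p1_def by (rule lp_deriv)
    hence "(\<gamma> has_vector_derivative 2 *\<^sub>R (ubar - one)) (at t)"
      by (rule has_vector_derivative_transform_within_open[where S = "{..<1/2}"])
         (use that in \<open>auto simp: \<gamma>_def joinpaths_def\<close>)
    hence vd: "vector_derivative \<gamma> (at t) = 2 *\<^sub>R (ubar - one)" by (rule vector_derivative_at)
    have gt: "\<gamma> t = p1 (2*t)" using that by (simp add: \<gamma>_def joinpaths_def)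
    show ?thesis unfolding H_def I1_def vd gt p1_def vector_derivative_linepath_at
      by (simp add: sum_distrib_left algebra_simps)
  qed
  have H2: "H t = 2 * g (2*t - 1)" if "1/2 < t" "t < 1" for t
  proof -
    have "((\<lambda>y. p2 (2*y + -1)) has_vector_derivative 2 *\<^sub>R (u - ubar)) (at t)"
      unfolding p2_def by (rule lp_deriv)
    hence "(\<gamma> has_vector_derivative 2 *\<^sub>R (u - ubar)) (at t)"
      by (rule has_vector_derivative_transform_within_open[where S = "{1/2<..}"])
         (use that in \<open>auto simp: \<gamma>_def joinpaths_def\<close>)
    hence vd: "vector_derivative \<gamma> (at t) = 2 *\<^sub>R (u - ubar)" by (rule vector_derivative_at)
    have gt: "\<gamma> t = p2 (2*t - 1)" using that by (simp add: \<gamma>_def joinpaths_def)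
    show ?thesis unfolding H_def g_def vd gt p2_def using wb
      by (simp add: sum_distrib_left algebra_simps)
  qed
  have "((\<lambda>s. 2 * I1 s) has_integral (2 * E ubar)) {0..1}"
    using has_integral_mult_right[OF hE1] by simp
  hence "((\<lambda>x. 2 * I1 (2 *\<^sub>R x + 0)) has_integral ((2 * E ubar) /\<^sub>R 2 ^ DIM(real)))
           (cbox ((0 - 0) /\<^sub>R 2) ((1 - 0) /\<^sub>R 2))"
    using has_integral_affinity_iff[where m=2 and f="\<lambda>s. 2 * I1 s" and I="2 * E ubar" and c=0 and a=0 and b=1] by simp
  hence "((\<lambda>x. 2 * I1 (2 * x)) has_integral E ubar) {0..1/2}" by simp
  hence int1: "(H has_integral E ubar) {0..1/2}"
    by (rule has_integral_spike_finite[where S = "{0, 1/2}", rotated 2]) (auto simp: H1)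
  have "H integrable_on {1/2..1}"
    using integrable_subinterval_real[OF has_integral_integrable[OF hE2]] by simp
  then obtain J where hJ: "(H has_integral J) {1/2..1}" by (auto simp: integrable_on_def)
  have "(H has_integral (E ubar + J)) {0..1}"
    using has_integral_combine[of 0 "1/2" 1 H "E ubar" J] int1 hJ by simp
  hence EJ: "E u = E ubar + J" using hE2 by (rule has_integral_unique[rotated])
  have "((\<lambda>t. 2 * g (2*t + -1)) has_integral J) {1/2..1}"
    by (rule has_integral_spike_finite[where S = "{1/2, 1}", rotated 2, OF hJ]) (auto simp: H2)
  hence "((\<lambda>x. 2 * g (2 *\<^sub>R x + -1)) has_integral ((2*J) /\<^sub>R 2 ^ DIM(real)))
           (cbox ((0 - -1) /\<^sub>R 2) ((1 - -1) /\<^sub>R 2))" by simp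
  hence gI: "((\<lambda>s. 2 * g s) has_integral (2*J)) {0..1}"
    using has_integral_affinity_iff[where m=2 and f="\<lambda>s. 2 * g s" and I="2*J" and c="-1" and a=0 and b=1] by simp
  have Jnn: "2*J \<ge> 0"
    by (rule has_integral_nonneg[OF gI]) (use gp1 in auto)
  have Jpos: "J > 0" if ne: "u \<noteq> ubar"
  proof -
    have "(\<lambda>s. 2 * g s) integrable_on {0..1/2}" "(\<lambda>s. 2 * g s) integrable_on {1/2..1}"
      using integrable_subinterval_real[OF has_integral_integrable[OF gI]] by auto
    then obtain K1 K2 where K1: "((\<lambda>s. 2 * g s) has_integral K1) {0..1/2}"
      and K2: "((\<lambda>s. 2 * g s) has_integral K2) {1/2..1}" by (auto simp: integrable_on_def)
    have K1nn: "K1 \<ge> 0" by (rule has_integral_nonneg[OF K1]) (use gp1 in auto)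
    have c: "((\<lambda>s. 2 * g (1/2)) has_integral ((1/2) * (2 * g (1/2)))) {1/2..1::real}"
      using has_integral_const_real[of "2 * g (1/2)" "1/2" "1::real"] by simp
    have "(1/2) * (2 * g (1/2)) \<le> K2"
      by (rule has_integral_le[OF c K2]) (use gp2 in auto)
    moreover have "g (1/2) > 0" using gp3[OF ne] .
    moreover have "2*J = K1 + K2"
      using has_integral_combine[of 0 "1/2" 1 "\<lambda>s. 2 * g s" K1 K2] K1 K2 gI
      by (auto dest: has_integral_unique)
    ultimately show ?thesis using K1nn by simp
  qed
  show ?thesis using EJ Jnn Jpos by (intro exI[of _ J]) auto
qed

theorem theorem5:
  fixes side :: "'f::finite \<Rightarrow> nat \<Rightarrow> 'e::finite"
    and wbar ubar :: "real^'e"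
    and E :: "real^'e \<Rightarrow> real"
  assumes "triangulated_surface side"
    and "connected_surface side"
    and "ubar \<in> Omega_u side"
    and "\<forall>i. cot_weight side ubar i = wbar$i"
    and "is_energy side wbar E"
  shows "(\<forall>u\<in>Omega_u side. E ubar \<le> E u) \<and>
         (\<forall>u\<in>Omega_u side. E u \<le> E ubar \<longrightarrow> u = ubar)"
proof (intro conjI ballI impI)
  fix u assume u: "u \<in> Omega_u side"
  obtain J where "E u = E ubar + J" "J \<ge> 0" "u \<noteq> ubar \<longrightarrow> J > 0"
    using key[OF assms u] by blast
  thus "E ubar \<le> E u" by simp
next
  fix u assume u: "u \<in> Omega_u side" and le: "E u \<le> E ubar"
  obtain J where "E u = E ubar + J" "J \<ge> 0" "u \<noteq> ubar \<longrightarrow> J > 0"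
    using key[OF assms u] by blast
  thus "u = ubar" using le by auto
qed

end
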